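(* For an odd integer $t\ge1$, in $S_{\mathrm{alg}}$, $$h(1)\,h[-1]^t\mathbf 1=\sum_{k\ge0}\binom{t}{2k+1}\frac{(2k+1)!}{k!\,(-24)^k}\,h(-1)^{t-2k-1}\mathbf 1.$$
   Context: $S_{\mathrm{alg}}=\mathbb{Q}[h(-1),h(-2),\dots]$ is the rank-one Heisenberg VOA with vacuum $\mathbf 1=1$; $h(n)$ for $n<0$ is multiplication by $h(n)$, $h(0)=0$, and $h(n)=n\,\partial/\partial h(-n)$ for $n>0$. The square-bracket mode $h[-1]$ is $h[-1]=\mathrm{Res}_w\,h(w)(\log(1+w))^{-1}=\sum_{k\ge0}c_k\,h(k-1)$ where $h(w)=\sum_m h(m)w^{-m-1}$ and $\sum_{k\ge0}c_kw^{k-1}=1/\log(1+w)$, so $h[-1]=h(-1)+\tfrac12h(0)-\tfrac1{12}h(1)+\tfrac1{24}h(2)-\cdots$. *)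

theory Defs
  imports "HOL-Library.Poly_Mapping" "HOL-Library.Groups_Big_Fun"
          "HOL-Computational_Algebra.Formal_Power_Series"
begin

text \<open>S_alg = Q[h(-1), h(-2), ...]: polynomials in countably many variables,
  represented as finitely supported maps from monomials (exponent vectors
  nat =>0 nat) to rationals. The variable with index i stands for h(-(i+1)).\<close>

type_synonym S_alg = "(nat \<Rightarrow>\<^sub>0 nat) \<Rightarrow>\<^sub>0 rat"

definition hvar :: "nat \<Rightarrow> S_alg" where
  "hvar i = Poly_Mapping.single (Poly_Mapping.single i 1) 1"

definition pderiv_var :: "nat \<Rightarrow> S_alg \<Rightarrow> S_alg" where
  "pderiv_var i p = (\<Sum>m\<in>Poly_Mapping.keys p.
      Poly_Mapping.single (m - Poly_Mapping.single i 1)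
        (of_nat (Poly_Mapping.lookup m i) * Poly_Mapping.lookup p m))"

definition hmode :: "int \<Rightarrow> S_alg \<Rightarrow> S_alg" where
  "hmode n v = (if n < 0 then hvar (nat (- n) - 1) * v
                else if n = 0 then 0
                else of_int n * pderiv_var (nat n - 1) v)"

text \<open>Coefficients c_k with sum_k c_k w^(k-1) = 1/log(1+w), i.e.
  sum_k c_k w^k = (log(1+w)/w)^(-1).\<close>
definition log1p_over_w :: "rat fps" where
  "log1p_over_w = Abs_fps (\<lambda>n. (-1) ^ n / of_nat (n + 1))"

definition cbr :: "nat \<Rightarrow> rat" where
  "cbr k = fps_nth (inverse log1p_over_w) k"

text \<open>Square-bracket mode h[-1] = sum_{k>=0} c_k h(k-1); on any given vector
  only finitely many terms are nonzero, so this is a finite-support sum.\<close>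
definition hbr_m1 :: "S_alg \<Rightarrow> S_alg" where
  "hbr_m1 v = Sum_any (\<lambda>k. Poly_Mapping.single 0 (cbr k) * hmode (int k - 1) v)"

definition vac :: S_alg where "vac = 1"

end

theory Submission
  imports Defs "HOL-Computational_Algebra.Polynomial"
begin


lemma cbr0: "cbr 0 = 1"
  by (simp add: cbr_def log1p_over_w_def)

lemma cbr2: "cbr 2 = -1/12"
proof -
  have c1: "fps_right_inverse_constructor log1p_over_w 1 1 = 1/2"
    by (simp add: log1p_over_w_def)
  have "cbr 2 = fps_right_inverse_constructor log1p_over_w 1 2"
    by (simp add: cbr_def fps_inverse_def log1p_over_w_def)
  also have "\<dots> = - (fps_nth log1p_over_w 1 * fps_right_inverse_constructor log1p_over_w 1 1
        + fps_nth log1p_over_w 2 * fps_right_inverse_constructor log1p_over_w 1 0)"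
    by (simp add: numeral_2_eq_2 atLeastAtMostSuc_conv)
  also have "\<dots> = -1/12" using c1 by (simp add: log1p_over_w_def)
  finally show ?thesis .
qed


lemma alg0: fixes F FJ FM P J M :: rat
  assumes "FJ \<noteq> 0" "FM \<noteq> 0" "J \<noteq> 0" "M \<noteq> 0" "M + 1 \<noteq> 0"
  shows "F / (J * FJ * FM) * (-1/24 * P) - 1/12 * ((M+1) * (F / (FJ * ((M+1) * M * FM)) * P))
    = (M + 2*J) * F / (J * FJ * (M * FM)) * (-1/24 * P)"
proof -
  have d: "FJ * ((M+1) * M * FM) = (M+1) * (FJ * M * FM)" by (simp add: algebra_simps)
  have "(M+1) * (F / ((M+1) * (FJ * M * FM)) * P) = F / (FJ * M * FM) * P"
    using assms(5) by simp
  hence "(M+1) * (F / (FJ * ((M+1) * M * FM)) * P) = F / (FJ * M * FM) * P"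
    unfolding d .
  moreover have "F / (J * FJ * FM) * (-1/24 * P) - 1/12 * (F / (FJ * M * FM) * P)
    = (M + 2*J) * F / (J * FJ * (M * FM)) * (-1/24 * P)"
    using assms by (simp add: field_simps)
  ultimately show ?thesis by simp
qed
lemma alg: fixes F FJ FM P :: rat
  assumes "FJ \<noteq> 0" "FM \<noteq> 0"
  shows "F / (of_nat (Suc j) * FJ * FM) * (-1/24 * P) - 1/12 * (of_nat (Suc (Suc m)) * (F / (FJ * (of_nat (Suc (Suc m)) * of_nat (Suc m) * FM)) * P))
    = of_nat (m + 2*j + 3) * F / (of_nat (Suc j) * FJ * (of_nat (Suc m) * FM)) * (-1/24 * P)"
proof -
  have "of_nat (Suc (Suc m)) = (of_nat (Suc m) + 1 :: rat)" "of_nat (m + 2*j + 3) = (of_nat (Suc m) + 2 * of_nat (Suc j) :: rat)"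
    by simp_all
  thus ?thesis using alg0[OF assms, of "of_nat (Suc j)" "of_nat (Suc m)" F P]
    by (simp only:)
qed



definition embN :: "nat \<Rightarrow> rat poly \<Rightarrow> S_alg" where
  "embN N p = (\<Sum>n<N. Poly_Mapping.single (Poly_Mapping.single 0 n) (coeff p n))"

definition emb :: "rat poly \<Rightarrow> S_alg" where
  "emb p = embN (Suc (degree p)) p"

lemma embN_emb: assumes "degree p < N" shows "embN N p = emb p"
proof -
  have "embN N p = (\<Sum>n<Suc (degree p). Poly_Mapping.single (Poly_Mapping.single 0 n) (coeff p n))"
    unfolding embN_def
    by (rule sum.mono_neutral_right) (use assms in \<open>auto simp: coeff_eq_0\<close>)
  thus ?thesis by (simp add: emb_def embN_def)
qed

lemma emb_add: "emb (p + q) = emb p + emb q"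
proof -
  define N where "N = Suc (max (degree p) (degree q))"
  have "degree (p+q) < N" unfolding N_def using degree_add_le_max[of p q] by auto
  hence "emb (p+q) = embN N (p+q)" by (simp add: embN_emb)
  also have "\<dots> = embN N p + embN N q"
    by (simp add: embN_def single_add sum.distrib)
  also have "\<dots> = emb p + emb q" by (simp add: embN_emb N_def)
  finally show ?thesis .
qed

lemma emb_smult: "emb (smult c p) = Poly_Mapping.single 0 c * emb p"
proof -
  have "emb (smult c p) = embN (Suc (degree p)) (smult c p)"
    by (rule embN_emb[symmetric]) (simp add: le_imp_less_Suc degree_smult_le)
  thus ?thesis unfolding emb_def embN_def sum_distrib_left by (simp add: mult_single del: sum.lessThan_Suc)
qed

lemma emb_sum: "finite A \<Longrightarrow> emb (\<Sum>k\<in>A. f k) = (\<Sum>k\<in>A. emb (f k))"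
  by (induction A rule: finite_induct) (auto simp: emb_add, simp add: emb_def embN_def)

lemma emb_1: "emb 1 = 1"
  by (simp add: emb_def embN_def)

lemma single0_add: "Poly_Mapping.single (0::nat) (a::nat) + Poly_Mapping.single 0 b = Poly_Mapping.single 0 (a+b)"
  by (simp add: single_add)

lemma emb_x: "hvar 0 * emb p = emb (pCons 0 p)"
proof -
  have "emb (pCons 0 p) = embN (Suc (Suc (degree p))) (pCons 0 p)"
    by (rule embN_emb[symmetric]) (simp add: degree_pCons_le le_imp_less_Suc)
  also have "\<dots> = (\<Sum>n<Suc (degree p). Poly_Mapping.single (Poly_Mapping.single 0 (Suc n)) (coeff p n))"
    unfolding embN_def by (subst sum.lessThan_Suc_shift) simp
  also have "\<dots> = hvar 0 * emb p"
    unfolding emb_def embN_def hvar_def sum_distrib_left by (simp add: mult_single single0_add del: sum.lessThan_Suc)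
  finally show ?thesis by simp
qed




lemma pm_aux1: "(m + Poly_Mapping.single i 1) - Poly_Mapping.single i (1::nat) = (m :: nat \<Rightarrow>\<^sub>0 nat)"
  by (rule poly_mapping_eqI) (simp add: lookup_minus lookup_add)

lemma pm_aux2: assumes "m - Poly_Mapping.single i (1::nat) = m'" "Poly_Mapping.lookup m i \<noteq> 0"
  shows "m = (m' + Poly_Mapping.single i 1 :: nat \<Rightarrow>\<^sub>0 nat)"
proof (rule poly_mapping_eqI)
  fix j
  have "Poly_Mapping.lookup m' j = Poly_Mapping.lookup m j - (1 when i = j)"
    using assms(1) by (auto simp: lookup_minus lookup_single)
  then show "Poly_Mapping.lookup m j = Poly_Mapping.lookup (m' + Poly_Mapping.single i 1) j"
    using assms(2) by (auto simp: lookup_add lookup_single when_def)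
qed

lemma lookup_pderiv_var:
  "Poly_Mapping.lookup (pderiv_var i p) m' = of_nat (Poly_Mapping.lookup m' i + 1) * Poly_Mapping.lookup p (m' + Poly_Mapping.single i 1)"
proof -
  define m0 where "m0 = m' + Poly_Mapping.single i 1"
  define c where "c m = of_nat (Poly_Mapping.lookup m i) * Poly_Mapping.lookup p m" for m
  have "Poly_Mapping.lookup (pderiv_var i p) m' = (\<Sum>m\<in>Poly_Mapping.keys p. (c m when m - Poly_Mapping.single i 1 = m'))"
    by (simp add: pderiv_var_def lookup_sum lookup_single c_def)
  also have "\<dots> = (\<Sum>m\<in>Poly_Mapping.keys p. (if m = m0 then c m else 0))"
  proof (rule sum.cong)
    fix m assume "m \<in> Poly_Mapping.keys p"
    show "(c m when m - Poly_Mapping.single i 1 = m') = (if m = m0 then c m else 0)"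
    proof (cases "m = m0")
      case True thus ?thesis by (simp add: m0_def pm_aux1)
    next
      case False
      have "c m = 0" if "m - Poly_Mapping.single i 1 = m'"
        using pm_aux2[OF that] False by (auto simp: m0_def c_def)
      thus ?thesis using False by (auto simp: when_def)
    qed
  qed simp
  also have "\<dots> = c m0" by (auto simp: in_keys_iff c_def)
  also have "\<dots> = of_nat (Poly_Mapping.lookup m' i + 1) * Poly_Mapping.lookup p m0"
    by (simp add: c_def m0_def lookup_add)
  finally show ?thesis by (simp add: m0_def)
qed

lemma pderiv_var_add: "pderiv_var i (p + q) = pderiv_var i p + pderiv_var i q"
  by (rule poly_mapping_eqI) (simp add: lookup_pderiv_var lookup_add algebra_simps)

lemma pderiv_var_0: "pderiv_var i 0 = 0"
  by (simp add: pderiv_var_def)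

lemma pderiv_var_sum: "finite A \<Longrightarrow> pderiv_var i (\<Sum>k\<in>A. f k) = (\<Sum>k\<in>A. pderiv_var i (f k))"
  by (induction A rule: finite_induct) (auto simp: pderiv_var_add pderiv_var_0)

lemma pderiv_var_single:
  "pderiv_var i (Poly_Mapping.single m a) = Poly_Mapping.single (m - Poly_Mapping.single i 1) (of_nat (Poly_Mapping.lookup m i) * a)"
  by (cases "a = 0") (simp_all add: pderiv_var_def)

lemma pderiv_var_emb_other: assumes "j \<noteq> 0" shows "pderiv_var j (emb p) = 0"
  using assms by (simp add: emb_def embN_def pderiv_var_sum pderiv_var_single lookup_single
     del: sum.lessThan_Suc)

lemma single0_minus: "Poly_Mapping.single (0::nat) (Suc n) - Poly_Mapping.single 0 (Suc 0) = Poly_Mapping.single 0 n"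
  by (rule poly_mapping_eqI) (simp add: lookup_minus lookup_single when_def)

lemma pderiv_var_emb: "pderiv_var 0 (emb p) = emb (pderiv p)"
proof -
  have "pderiv_var 0 (emb p) = (\<Sum>n<Suc (degree p). Poly_Mapping.single (Poly_Mapping.single 0 n - Poly_Mapping.single 0 1) (of_nat n * coeff p n))"
    by (simp add: emb_def embN_def pderiv_var_sum pderiv_var_single del: sum.lessThan_Suc)
  also have "\<dots> = (\<Sum>n<degree p. Poly_Mapping.single (Poly_Mapping.single 0 n) (of_nat (Suc n) * coeff p (Suc n)))"
    by (subst sum.lessThan_Suc_shift) (simp add: single0_minus)
  also have "\<dots> = embN (degree p) (pderiv p)"
    by (simp add: embN_def coeff_pderiv)
  also have "\<dots> = emb (pderiv p)"
  proof (cases "degree p")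
    case 0 hence "pderiv p = 0" by (simp add: pderiv_eq_0_iff)
    thus ?thesis using 0 by (simp add: embN_def emb_def)
  next
    case (Suc d) thus ?thesis using degree_pderiv[of p] by (intro embN_emb) simp
  qed
  finally show ?thesis .
qed




definition Lp :: "rat poly \<Rightarrow> rat poly" where
  "Lp p = pCons 0 p + smult (-1/12) (pderiv p)"

lemma hmode_m1: "hmode (-1) v = hvar 0 * v"
  by (simp add: hmode_def)

lemma hmode_1: "hmode 1 v = pderiv_var 0 v"
  by (simp add: hmode_def)

lemma hbr_emb: "hbr_m1 (emb p) = emb (Lp p)"
proof -
  define f where "f k = Poly_Mapping.single 0 (cbr k) * hmode (int k - 1) (emb p)" for k
  have "{k. f k \<noteq> 0} \<subseteq> {0,2}"
  proof
    fix k assume "k \<in> {k. f k \<noteq> 0}"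
    hence fk: "f k \<noteq> 0" by simp
    show "k \<in> {0,2}"
    proof (rule ccontr)
      assume "k \<notin> {0,2}"
      then consider "k = 1" | "k \<ge> 3" by force
      thus False
      proof cases
        case 1 thus False using fk by (simp add: f_def hmode_def)
      next
        case 2
        hence "nat (int k - 1) - 1 \<noteq> 0" by simp
        hence "pderiv_var (nat (int k - 1) - 1) (emb p) = 0" by (rule pderiv_var_emb_other)
        thus False using fk 2 by (simp add: f_def hmode_def)
      qed
    qed
  qed
  hence "hbr_m1 (emb p) = sum f {0,2}"
    unfolding hbr_m1_def f_def[symmetric] by (intro Sum_any.expand_superset) auto
  also have "\<dots> = hvar 0 * emb p + Poly_Mapping.single 0 (-1/12) * pderiv_var 0 (emb p)"
    by (simp add: f_def cbr0 cbr2 hmode_def)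
  also have "\<dots> = emb (Lp p)"
    unfolding Lp_def emb_add emb_smult emb_x pderiv_var_emb by simp
  finally show ?thesis .
qed

lemma iter_hbr: "(hbr_m1 ^^ t) vac = emb ((Lp ^^ t) 1)"
  by (induction t) (simp_all add: vac_def emb_1 hbr_emb)

lemma iter_hm1: "(hmode (-1) ^^ n) vac = emb ((pCons 0 ^^ n) 1)"
  by (induction n) (simp_all add: vac_def emb_1 hmode_m1 emb_x)

lemma coeff_X_pow: "coeff ((pCons 0 ^^ n) 1) m = (if m = n then 1 else 0)"
  by (induction n arbitrary: m) (auto simp: coeff_pCons split: nat.splits)




definition cf :: "nat \<Rightarrow> nat \<Rightarrow> rat" where
  "cf s n = (if n \<le> s \<and> even (s - n) then fact s / (fact ((s-n) div 2) * fact n) * (-1/24)^((s-n) div 2) else 0)"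

lemma cf_eq: "s = n + 2*k \<Longrightarrow> cf s n = fact s / (fact k * fact n) * (-1/24)^k"
  by (simp add: cf_def)

lemma cf_zero: "\<not> (n \<le> s \<and> even (s - n)) \<Longrightarrow> cf s n = 0"
  by (simp add: cf_def)

lemma coeff_Lp: "coeff (Lp p) n = (if n = 0 then 0 else coeff p (n-1)) - 1/12 * (of_nat (Suc n) * coeff p (Suc n))"
  by (simp add: Lp_def coeff_pCons coeff_pderiv split: nat.splits)

lemma cf_step: "cf (Suc s) n = (if n = 0 then 0 else cf s (n-1)) - 1/12 * (of_nat (Suc n) * cf s (Suc n))"
proof -
  consider "n > Suc s" | k where "Suc s = n + 2*k" | k where "Suc s = n + 2*k + 1"
  proof -
    assume a: "n > Suc s \<Longrightarrow> thesis"
      "\<And>k. Suc s = n + 2*k \<Longrightarrow> thesis" "\<And>k. Suc s = n + 2*k + 1 \<Longrightarrow> thesis"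
    show thesis
    proof (cases "n > Suc s")
      case True thus ?thesis by (rule a(1))
    next
      case False
      then obtain d where d: "Suc s = n + d" by (metis le_add_diff_inverse not_less)
      show ?thesis
      proof (cases "even d")
        case True then obtain k where "d = 2*k" by auto
        thus ?thesis using d a(2) by auto
      next
        case False then obtain k where "d = 2*k+1" using oddE by blast
        thus ?thesis using d a(3) by auto
      qed
    qed
  qed
  thus ?thesis
  proof cases
    case 1 thus ?thesis by (auto simp: cf_def)
  next
    case (2 k)
    show ?thesis
    proof (cases k)
      case 0
      hence "n = Suc s" using 2 by simp
      thus ?thesis by (simp add: cf_def)
    next
      case (Suc j)
      hence s: "s = Suc n + 2*j" using 2 by simp
      have A: "cf s (Suc n) = fact s / (fact j * fact (Suc n)) * (-1/24)^j" by (rule cf_eq[OF s])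
      have B: "cf (Suc s) n = fact (Suc s) / (fact (Suc j) * fact n) * (-1/24)^(Suc j)"
        by (rule cf_eq) (use 2 Suc in simp)
      show ?thesis
      proof (cases n)
        case 0
        have e1: "(fact (Suc s) :: rat) = 2 * of_nat (Suc j) * fact s"
          using s 0 by (simp add: fact_Suc algebra_simps)
        have e2: "(fact (Suc j) :: rat) = of_nat (Suc j) * fact j" by (simp add: fact_Suc)
        have r: "(fact (Suc s) :: rat) / fact (Suc j) = 2 * fact s / fact j"
          unfolding e1 e2 by (simp del: of_nat_Suc)
        have "cf (Suc s) n = (fact (Suc s) / fact (Suc j)) * (-1/24)^(Suc j)"
          unfolding B using 0 by simp
        also have "\<dots> = - 1/12 * (fact s / fact j * (-1/24)^j)" unfolding r by simp
        finally show ?thesis unfolding A using 0 by simp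
      next
        case (Suc m)
        have C: "cf s m = fact s / (fact (Suc j) * fact m) * (-1/24)^(Suc j)"
          by (rule cf_eq) (use s Suc in simp)
        have A': "cf s (Suc n) = fact s / (fact j * (of_nat (Suc (Suc m)) * of_nat (Suc m) * fact m)) * (-1/24)^j"
          using A Suc by (simp add: fact_Suc del: of_nat_Suc)
        have C': "cf s m = fact s / (of_nat (Suc j) * fact j * fact m) * (-1/24 * (-1/24)^j)"
          unfolding C by (simp add: fact_Suc del: of_nat_Suc)
        have ss: "Suc s = m + 2*j + 3" using s Suc by simp
        have B': "cf (Suc s) n = of_nat (m+2*j+3) * fact s / (of_nat (Suc j) * fact j * (of_nat (Suc m) * fact m)) * (-1/24 * (-1/24)^j)"
        proof -
          have "cf (Suc s) n = of_nat (Suc s) * fact s / (of_nat (Suc j) * fact j * (of_nat (Suc m) * fact m)) * (-1/24 * (-1/24)^j)"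
            using B Suc by (simp add: fact_Suc del: of_nat_Suc)
          thus ?thesis unfolding ss .
        qed
        show ?thesis unfolding A' B' using C' Suc
          alg[where F="fact s" and FJ="fact j" and FM="fact m" and P="(-1/24)^j" and j=j and m=m]
          by simp
      qed
    qed
  next
    case (3 k)
    have L: "cf (Suc s) n = 0" by (rule cf_zero) (use 3 in auto)
    have R1: "n \<noteq> 0 \<Longrightarrow> cf s (n-1) = 0" by (rule cf_zero) (use 3 in auto)
    have R2: "cf s (Suc n) = 0" by (rule cf_zero) (use 3 in auto)
    show ?thesis using L R1 R2 by simp
  qed
qed

lemma coeff_iter: "coeff ((Lp ^^ s) 1) n = cf s n"
proof (induction s arbitrary: n)
  case 0 thus ?case by (simp add: cf_def)
next
  case (Suc s) thus ?case by (simp add: coeff_Lp cf_step)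
qed




lemma key_poly:
  assumes "odd t"
  shows "pderiv ((Lp ^^ t) 1) = (\<Sum>k\<le>t div 2. smult
        (of_nat (t choose (2*k+1)) * of_nat (fact (2*k+1)) / (of_nat (fact k) * (-24) ^ k))
        ((pCons 0 ^^ (t - 2*k - 1)) 1))"
    (is "_ = (\<Sum>k\<le>t div 2. smult (?g k) _)")
proof (rule poly_eqI)
  fix n
  obtain T where tT: "t = 2*T + 1" using assms oddE by blast
  have L: "coeff (pderiv ((Lp ^^ t) 1)) n = of_nat (Suc n) * cf t (Suc n)"
    by (simp add: coeff_pderiv coeff_iter)
  have R: "coeff (\<Sum>k\<le>t div 2. smult (?g k) ((pCons 0 ^^ (t - 2*k - 1)) 1)) n
      = (\<Sum>k\<le>T. if k = (t - 1 - n) div 2 \<and> n \<le> t - 1 \<and> even (t - 1 - n) then ?g k else 0)"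
    unfolding coeff_sum
  proof (rule sum.cong)
    show "{..t div 2} = {..T}" using tT by simp
  next
    fix k assume "k \<in> {..T}"
    hence k: "k \<le> T" by simp
    have eq: "(n = t - 2*k - 1) = (k = (t - 1 - n) div 2 \<and> n \<le> t - 1 \<and> even (t - 1 - n))"
      using k tT by auto
    thus "coeff (smult (?g k) ((pCons 0 ^^ (t - 2*k - 1)) 1)) n
        = (if k = (t - 1 - n) div 2 \<and> n \<le> t - 1 \<and> even (t - 1 - n) then ?g k else 0)"
      unfolding coeff_smult coeff_X_pow eq
      by (simp only: if_distrib[of "\<lambda>x. ?g k * x"] mult_1_right mult_zero_right)
  qed
  show "coeff (pderiv ((Lp ^^ t) 1)) n = coeff (\<Sum>k\<le>t div 2. smult (?g k) ((pCons 0 ^^ (t - 2*k - 1)) 1)) n"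
  proof (cases "n \<le> t - 1 \<and> even (t - 1 - n)")
    case True
    define k0 where "k0 = (t - 1 - n) div 2"
    have t0: "t = Suc n + 2*k0" using True tT by (auto simp: k0_def)
    have k0T: "k0 \<le> T" using t0 tT by simp
    have "coeff (\<Sum>k\<le>t div 2. smult (?g k) ((pCons 0 ^^ (t - 2*k - 1)) 1)) n = ?g k0"
    proof -
      have "(\<Sum>k\<le>T. if k = k0 \<and> n \<le> t - 1 \<and> even (t - 1 - n) then ?g k else 0)
          = (\<Sum>k\<le>T. if k = k0 then ?g k else 0)"
        using True by (intro sum.cong) auto
      also have "\<dots> = ?g k0" using k0T by (subst sum.delta) auto
      finally show ?thesis unfolding R k0_def .
    qed
    also have "\<dots> = of_nat (Suc n) * cf t (Suc n)"
    proof -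
      have le: "2*k0+1 \<le> t" and tn: "t - (2*k0+1) = n" using t0 by simp_all
      have bf: "fact (2*k0+1) * fact n * (t choose (2*k0+1)) = (fact t :: nat)"
        using binomial_fact_lemma[OF le] unfolding tn .
      have bf2: "(fact (2*k0+1) :: rat) * fact n * of_nat (t choose (2*k0+1)) = fact t"
        using arg_cong[OF bf, of "of_nat :: nat \<Rightarrow> rat"] by (simp only: of_nat_mult of_nat_fact)
      have bf': "of_nat (t choose (2*k0+1)) * of_nat (fact (2*k0+1)) = (fact t / fact n :: rat)"
        using bf2 by (simp add: field_simps)
      have c: "cf t (Suc n) = fact t / (fact k0 * fact (Suc n)) * (-1/24)^k0" by (rule cf_eq[OF t0])
      have p0: "((-1/24)::rat) = 1 / (-24)" by simp
      have p: "((-1/24)::rat)^k0 = 1 / (-24)^k0" unfolding p0 by (rule power_one_over)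
      have fs: "(fact (Suc n) :: rat) = of_nat (Suc n) * fact n" by (rule fact_Suc)
      have ab: "\<And>F N K S Q :: rat. N \<noteq> 0 \<Longrightarrow> K \<noteq> 0 \<Longrightarrow> S \<noteq> 0 \<Longrightarrow> Q \<noteq> 0 \<Longrightarrow>
          (F/N)/(K*Q) = S*(F/(K*(S*N))*(1/Q))" by (simp add: field_simps)
      show ?thesis unfolding c bf' p fs unfolding of_nat_fact
        by (rule ab) simp_all
    qed
    finally show ?thesis using L by simp
  next
    case False
    have "cf t (Suc n) = 0" by (rule cf_zero) (use False tT in auto)
    moreover have "(\<Sum>k\<le>T. if k = (t - 1 - n) div 2 \<and> n \<le> t - 1 \<and> even (t - 1 - n) then ?g k else 0) = 0"
      using False by (intro sum.neutral ballI) (simp only: de_Morgan_conj if_False simp_thms, auto)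
    ultimately show ?thesis unfolding L R by simp
  qed
qed



theorem mainTheorem4:
  fixes t :: nat
  assumes "odd t" and "t \<ge> 1"
  shows "hmode 1 ((hbr_m1 ^^ t) vac) =
    (\<Sum>k\<le>t div 2. Poly_Mapping.single 0
        (of_nat (t choose (2*k+1)) * of_nat (fact (2*k+1))
          / (of_nat (fact k) * (-24) ^ k))
      * (hmode (-1) ^^ (t - 2*k - 1)) vac)"
proof -
  have "hmode 1 ((hbr_m1 ^^ t) vac) = emb (pderiv ((Lp ^^ t) 1))"
    by (simp add: iter_hbr hmode_1 pderiv_var_emb)
  also have "\<dots> = emb (\<Sum>k\<le>t div 2. smult
        (of_nat (t choose (2*k+1)) * of_nat (fact (2*k+1)) / (of_nat (fact k) * (-24) ^ k))
        ((pCons 0 ^^ (t - 2*k - 1)) 1))"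
    by (simp only: key_poly[OF assms(1)])
  also have "\<dots> = (\<Sum>k\<le>t div 2. Poly_Mapping.single 0
        (of_nat (t choose (2*k+1)) * of_nat (fact (2*k+1))
          / (of_nat (fact k) * (-24) ^ k))
      * (hmode (-1) ^^ (t - 2*k - 1)) vac)"
    by (simp only: emb_sum finite_atMost emb_smult iter_hm1)
  finally show ?thesis .
qed

end
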